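(* Let $S$ be the $d$-dimensional quantum system ($d<\infty$, orthonormal basis $\{|k\rangle\}$) with all density matrices as states and all quantum channels as transformations, and let $\mathcal D(\cdot)=\sum_k|k\rangle\langle k|\cdot|k\rangle\langle k|$. Let the agent $A$ have a set of actions $\mathsf{Act}(A;S)$ such that (1) $\mathsf{Act}(A;S)$ contains every classical channel, i.e. every channel $\mathcal T$ with $\mathcal T=\mathcal D\circ\mathcal T\circ\mathcal D$, and (2) $\mathcal D\circ\mathcal T=\mathcal T\circ\mathcal D$ for every $\mathcal T\in\mathsf{Act}(A;S)$. Then (i) two states $\rho,\sigma$ are equivalent for $A$ iff $\mathcal D(\rho)=\mathcal D(\sigma)$; (ii) two transformations $\mathcal S,\mathcal T\in\mathsf{Act}(A;S)''$ are equivalent for $A$ iff $\mathcal D\circ\mathcal S\circ\mathcal D=\mathcal D\circ\mathcal T\circ\mathcal D$. Hence $S_A$ is the $d$-dimensional classical system (diagonal density matrices, classical stochastic maps).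
   Context: For an agent $A$, $\mathsf{Act}(A;S)'$ is the set of channels commuting with each element of $\mathsf{Act}(A;S)$, and $\mathsf{Act}(A;S)''=(\mathsf{Act}(A;S)')'$. $\mathrm{Deg}_{A'}(\rho)=\{\mathcal B(\rho):\mathcal B\in\mathsf{Act}(A;S)'\}$, $\mathrm{Deg}_{A'}(\mathcal T)=\{\mathcal B_1\circ\mathcal T\circ\mathcal B_2:\mathcal B_1,\mathcal B_2\in\mathsf{Act}(A;S)'\}$. States $\rho,\sigma$ (resp. transformations $\mathcal S,\mathcal T\in\mathsf{Act}(A;S)''$) are equivalent for $A$ if they are joined by a finite chain of states (resp. elements of $\mathsf{Act}(A;S)''$) in which consecutive elements have intersecting $\mathrm{Deg}_{A'}$ sets. The subsystem $S_A$ has as states and transformations the corresponding equivalence classes. *)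

theory Defs
  imports Complex_Main
begin

text \<open>A d-dimensional quantum system: the orthonormal basis is indexed by a finite
  type 'd (so d = CARD('d)); a d x d complex matrix is a function 'd => 'd => complex,
  the entry X i j being the matrix element of X between basis vectors i and j.\<close>

type_synonym 'd qmat = "'d \<Rightarrow> 'd \<Rightarrow> complex"
type_synonym 'd superop = "'d qmat \<Rightarrow> 'd qmat"

definition mtrace :: "('d::finite) qmat \<Rightarrow> complex" where
  "mtrace X = (\<Sum>i\<in>UNIV. X i i)"

definition psd :: "('d::finite) qmat \<Rightarrow> bool" where
  "psd X \<longleftrightarrow> (\<forall>v :: 'd \<Rightarrow> complex.
     Im (\<Sum>i\<in>UNIV. \<Sum>j\<in>UNIV. cnj (v i) * X i j * v j) = 0 \<and>
     Re (\<Sum>i\<in>UNIV. \<Sum>j\<in>UNIV. cnj (v i) * X i j * v j) \<ge> 0)"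

definition density :: "('d::finite) qmat \<Rightarrow> bool" where
  "density \<rho> \<longleftrightarrow> psd \<rho> \<and> mtrace \<rho> = 1"

text \<open>A (dk) x (dk) matrix on C^k (x) C^d, written as a k x k array of d x d blocks
  X a b (a, b < k); positivity of such a block matrix.\<close>
definition block_psd :: "nat \<Rightarrow> (nat \<Rightarrow> nat \<Rightarrow> ('d::finite) qmat) \<Rightarrow> bool" where
  "block_psd k X \<longleftrightarrow> (\<forall>v :: nat \<Rightarrow> 'd \<Rightarrow> complex.
     Im (\<Sum>a<k. \<Sum>b<k. \<Sum>i\<in>UNIV. \<Sum>j\<in>UNIV. cnj (v a i) * X a b i j * v b j) = 0 \<and>
     Re (\<Sum>a<k. \<Sum>b<k. \<Sum>i\<in>UNIV. \<Sum>j\<in>UNIV. cnj (v a i) * X a b i j * v b j) \<ge> 0)"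

definition clinear_superop :: "('d::finite) superop \<Rightarrow> bool" where
  "clinear_superop T \<longleftrightarrow>
     (\<forall>X Y. T (\<lambda>i j. X i j + Y i j) = (\<lambda>i j. T X i j + T Y i j)) \<and>
     (\<forall>c X. T (\<lambda>i j. c * X i j) = (\<lambda>i j. c * T X i j))"

text \<open>Complete positivity: id_k (x) T is positive for every ancilla dimension k
  (id_k (x) T acts blockwise).\<close>
definition completely_positive :: "('d::finite) superop \<Rightarrow> bool" where
  "completely_positive T \<longleftrightarrow>
     (\<forall>k X. block_psd k X \<longrightarrow> block_psd k (\<lambda>a b. T (X a b)))"

definition trace_preserving :: "('d::finite) superop \<Rightarrow> bool" where
  "trace_preserving T \<longleftrightarrow> (\<forall>X. mtrace (T X) = mtrace X)"

definition channel :: "('d::finite) superop \<Rightarrow> bool" where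
  "channel T \<longleftrightarrow> clinear_superop T \<and> completely_positive T \<and> trace_preserving T"

definition dephase :: "('d::finite) superop" where
  "dephase X = (\<lambda>i j. if i = j then X i j else 0)"

definition classical_channel :: "('d::finite) superop \<Rightarrow> bool" where
  "classical_channel T \<longleftrightarrow> channel T \<and> T = dephase \<circ> T \<circ> dephase"

definition commutant :: "('d::finite) superop set \<Rightarrow> 'd superop set" where
  "commutant A = {B. channel B \<and> (\<forall>T\<in>A. B \<circ> T = T \<circ> B)}"

definition Deg_state :: "('d::finite) superop set \<Rightarrow> 'd qmat \<Rightarrow> 'd qmat set" where
  "Deg_state Act \<rho> = {B \<rho> | B. B \<in> commutant Act}"

definition Deg_trans :: "('d::finite) superop set \<Rightarrow> 'd superop \<Rightarrow> 'd superop set" where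
  "Deg_trans Act T = {B1 \<circ> T \<circ> B2 | B1 B2. B1 \<in> commutant Act \<and> B2 \<in> commutant Act}"

text \<open>Equivalence for the agent: finite chains (reflexive-transitive closure) of states
  (resp. elements of Act'') with consecutive Deg sets intersecting.\<close>
definition state_equiv :: "('d::finite) superop set \<Rightarrow> 'd qmat \<Rightarrow> 'd qmat \<Rightarrow> bool" where
  "state_equiv Act \<rho> \<sigma> \<longleftrightarrow>
     (\<lambda>x y. density x \<and> density y \<and> Deg_state Act x \<inter> Deg_state Act y \<noteq> {})\<^sup>*\<^sup>* \<rho> \<sigma>"

definition trans_equiv :: "('d::finite) superop set \<Rightarrow> 'd superop \<Rightarrow> 'd superop \<Rightarrow> bool" where
  "trans_equiv Act S T \<longleftrightarrow>
     (\<lambda>x y. x \<in> commutant (commutant Act) \<and> y \<in> commutant (commutant Act) \<and>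
            Deg_trans Act x \<inter> Deg_trans Act y \<noteq> {})\<^sup>*\<^sup>* S T"

end

theory Submission
  imports Defs
begin

definition Ek :: "'d \<Rightarrow> ('d::finite) qmat" where
  "Ek k = (\<lambda>i j. if i = k \<and> j = k then 1 else 0)"

definition Tk :: "'d \<Rightarrow> ('d::finite) superop" where
  "Tk k X = (\<lambda>i j. mtrace X * Ek k i j)"

lemma diag_form:
  fixes X :: "nat \<Rightarrow> nat \<Rightarrow> ('d::finite) qmat"
  assumes "block_psd k X"
  shows "Im (\<Sum>a<k. \<Sum>b<k. cnj (w a) * X a b i i * w b) = 0 \<and>
         Re (\<Sum>a<k. \<Sum>b<k. cnj (w a) * X a b i i * w b) \<ge> 0"
proof -
  define v where "v = (\<lambda>a (j::'d). if j = i then w a else 0)"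
  have eq: "(\<Sum>i'\<in>UNIV. \<Sum>j'\<in>UNIV. cnj (v a i') * X a b i' j' * v b j') = cnj (w a) * X a b i i * w b" for a b
  proof -
    have "(\<Sum>i'\<in>UNIV. \<Sum>j'\<in>UNIV. cnj (v a i') * X a b i' j' * v b j')
        = (\<Sum>i'\<in>UNIV. if i' = i then (\<Sum>j'\<in>UNIV. cnj (w a) * X a b i j' * v b j') else 0)"
      by (rule sum.cong) (auto simp: v_def)
    also have "\<dots> = (\<Sum>j'\<in>UNIV. cnj (w a) * X a b i j' * v b j')" by simp
    also have "\<dots> = (\<Sum>j'\<in>UNIV. if j' = i then cnj (w a) * X a b i i * w b else 0)"
      by (rule sum.cong) (auto simp: v_def)
    also have "\<dots> = cnj (w a) * X a b i i * w b" by simp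
    finally show ?thesis .
  qed
  from assms have "Im (\<Sum>a<k. \<Sum>b<k. \<Sum>i'\<in>UNIV. \<Sum>j'\<in>UNIV. cnj (v a i') * X a b i' j' * v b j') = 0 \<and>
     Re (\<Sum>a<k. \<Sum>b<k. \<Sum>i'\<in>UNIV. \<Sum>j'\<in>UNIV. cnj (v a i') * X a b i' j' * v b j') \<ge> 0"
    unfolding block_psd_def by blast
  then show ?thesis by (simp add: eq)
qed

lemma sum_form_nonneg:
  fixes X :: "nat \<Rightarrow> nat \<Rightarrow> ('d::finite) qmat"
  assumes "block_psd k X"
  shows "Im (\<Sum>i\<in>UNIV. \<Sum>a<k. \<Sum>b<k. cnj (w i a) * X a b i i * w i b) = 0 \<and>
         Re (\<Sum>i\<in>UNIV. \<Sum>a<k. \<Sum>b<k. cnj (w i a) * X a b i i * w i b) \<ge> 0"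
  using diag_form[OF assms, of "w _"]
  by (auto simp: Im_sum Re_sum intro: sum_nonneg)

lemma dephase_channel: "channel (dephase :: ('d::finite) superop)"
proof -
  have lin: "clinear_superop (dephase :: 'd superop)"
    unfolding clinear_superop_def dephase_def by (auto simp: fun_eq_iff)
  have tp: "trace_preserving (dephase :: 'd superop)"
    unfolding trace_preserving_def mtrace_def dephase_def by simp
  have cp: "completely_positive (dephase :: 'd superop)"
    unfolding completely_positive_def
  proof (intro allI impI)
    fix k and X :: "nat \<Rightarrow> nat \<Rightarrow> 'd qmat"
    assume bp: "block_psd k X"
    show "block_psd k (\<lambda>a b. dephase (X a b))"
      unfolding block_psd_def
    proof
      fix v :: "nat \<Rightarrow> 'd \<Rightarrow> complex"
      have e: "(\<Sum>a<k. \<Sum>b<k. \<Sum>i\<in>UNIV. \<Sum>j\<in>UNIV. cnj (v a i) * dephase (X a b) i j * v b j)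
         = (\<Sum>i\<in>UNIV. \<Sum>a<k. \<Sum>b<k. cnj (v a i) * X a b i i * v b i)"
      proof -
        have "(\<Sum>a<k. \<Sum>b<k. \<Sum>i\<in>UNIV. \<Sum>j\<in>UNIV. cnj (v a i) * dephase (X a b) i j * v b j)
           = (\<Sum>a<k. \<Sum>b<k. \<Sum>i\<in>UNIV. cnj (v a i) * X a b i i * v b i)"
        proof -
          have "(\<Sum>j\<in>UNIV. cnj (v a i) * dephase (X a b) i j * v b j) = cnj (v a i) * X a b i i * v b i" for a b i
          proof -
            have "(\<Sum>j\<in>UNIV. cnj (v a i) * dephase (X a b) i j * v b j)
              = (\<Sum>j\<in>UNIV. if j = i then cnj (v a i) * X a b i i * v b i else 0)"
              by (rule sum.cong) (auto simp: dephase_def)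
            then show ?thesis by simp
          qed
          then show ?thesis by simp
        qed
        also have "\<dots> = (\<Sum>a<k. \<Sum>i\<in>UNIV. \<Sum>b<k. cnj (v a i) * X a b i i * v b i)"
          by (simp add: sum.swap[of _ "{..<k}" UNIV])
        also have "\<dots> = (\<Sum>i\<in>UNIV. \<Sum>a<k. \<Sum>b<k. cnj (v a i) * X a b i i * v b i)"
          by (rule sum.swap)
        finally show ?thesis .
      qed
      show "Im (\<Sum>a<k. \<Sum>b<k. \<Sum>i\<in>UNIV. \<Sum>j\<in>UNIV. cnj (v a i) * dephase (X a b) i j * v b j) = 0 \<and>
        0 \<le> Re (\<Sum>a<k. \<Sum>b<k. \<Sum>i\<in>UNIV. \<Sum>j\<in>UNIV. cnj (v a i) * dephase (X a b) i j * v b j)"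
        unfolding e using sum_form_nonneg[OF bp, of "\<lambda>i a. v a i"] by simp
    qed
  qed
  show ?thesis using lin tp cp unfolding channel_def by simp
qed

lemma Tk_channel: "channel (Tk k :: ('d::finite) superop)"
proof -
  have lin: "clinear_superop (Tk k :: 'd superop)"
    unfolding clinear_superop_def Tk_def mtrace_def
    by (auto simp: fun_eq_iff sum.distrib sum_distrib_left algebra_simps)
  have tp: "trace_preserving (Tk k :: 'd superop)"
    unfolding trace_preserving_def Tk_def Ek_def by (simp add: mtrace_def if_distrib cong: if_cong)
  have cp: "completely_positive (Tk k :: 'd superop)"
    unfolding completely_positive_def
  proof (intro allI impI)
    fix n and X :: "nat \<Rightarrow> nat \<Rightarrow> 'd qmat"
    assume bp: "block_psd n X"
    show "block_psd n (\<lambda>a b. Tk k (X a b))"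
      unfolding block_psd_def
    proof
      fix v :: "nat \<Rightarrow> 'd \<Rightarrow> complex"
      have e: "(\<Sum>a<n. \<Sum>b<n. \<Sum>i\<in>UNIV. \<Sum>j\<in>UNIV. cnj (v a i) * Tk k (X a b) i j * v b j)
         = (\<Sum>i\<in>UNIV. \<Sum>a<n. \<Sum>b<n. cnj (v a k) * X a b i i * v b k)"
      proof -
        have "(\<Sum>a<n. \<Sum>b<n. \<Sum>i\<in>UNIV. \<Sum>j\<in>UNIV. cnj (v a i) * Tk k (X a b) i j * v b j)
           = (\<Sum>a<n. \<Sum>b<n. \<Sum>i\<in>UNIV. cnj (v a k) * X a b i i * v b k)"
        proof -
          have "(\<Sum>i\<in>UNIV. \<Sum>j\<in>UNIV. cnj (v a i) * Tk k (X a b) i j * v b j) = (\<Sum>i\<in>UNIV. cnj (v a k) * X a b i i * v b k)" for a b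
          proof -
            have "(\<Sum>i\<in>UNIV. \<Sum>j\<in>UNIV. cnj (v a i) * Tk k (X a b) i j * v b j)
              = (\<Sum>i\<in>UNIV. if i = k then (\<Sum>j\<in>UNIV. if j = k then cnj (v a k) * mtrace (X a b) * v b k else 0) else 0)"
            proof (rule sum.cong[OF refl])
              fix i :: 'd
              show "(\<Sum>j\<in>UNIV. cnj (v a i) * Tk k (X a b) i j * v b j) =
                (if i = k then (\<Sum>j\<in>UNIV. if j = k then cnj (v a k) * mtrace (X a b) * v b k else 0) else 0)"
              proof (cases "i = k")
                case True
                have "(\<Sum>j\<in>UNIV. cnj (v a i) * Tk k (X a b) i j * v b j) =
                   (\<Sum>j\<in>UNIV. if j = k then cnj (v a k) * mtrace (X a b) * v b k else 0)"
                  by (rule sum.cong[OF refl]) (simp add: Tk_def Ek_def True)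
                then show ?thesis using True by simp
              next
                case False
                then show ?thesis by (simp add: Tk_def Ek_def)
              qed
            qed
            also have "\<dots> = cnj (v a k) * mtrace (X a b) * v b k" by simp
            also have "\<dots> = (\<Sum>i\<in>UNIV. cnj (v a k) * X a b i i * v b k)"
              by (simp add: mtrace_def sum_distrib_left sum_distrib_right)
            finally show ?thesis .
          qed
          then show ?thesis by simp
        qed
        also have "\<dots> = (\<Sum>a<n. \<Sum>i\<in>UNIV. \<Sum>b<n. cnj (v a k) * X a b i i * v b k)"
          by (simp add: sum.swap[of _ "{..<n}" UNIV])
        also have "\<dots> = (\<Sum>i\<in>UNIV. \<Sum>a<n. \<Sum>b<n. cnj (v a k) * X a b i i * v b k)"
          by (rule sum.swap)
        finally show ?thesis .
      qed
      show "Im (\<Sum>a<n. \<Sum>b<n. \<Sum>i\<in>UNIV. \<Sum>j\<in>UNIV. cnj (v a i) * Tk k (X a b) i j * v b j) = 0 \<and>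
        0 \<le> Re (\<Sum>a<n. \<Sum>b<n. \<Sum>i\<in>UNIV. \<Sum>j\<in>UNIV. cnj (v a i) * Tk k (X a b) i j * v b j)"
        unfolding e using sum_form_nonneg[OF bp, of "\<lambda>i a. v a k"] by simp
    qed
  qed
  show ?thesis using lin tp cp unfolding channel_def by simp
qed


lemma lin_zero:
  assumes "clinear_superop (B :: ('d::finite) superop)"
  shows "B (\<lambda>i j. 0) = (\<lambda>i j. 0)"
proof -
  have "B (\<lambda>i j. 0 * (\<lambda>i j. 0::complex) i j) = (\<lambda>i j. 0 * B (\<lambda>i j. 0) i j)"
    using assms[unfolded clinear_superop_def, THEN conjunct2, rule_format, of 0 "\<lambda>i j. 0"] .
  then show ?thesis by simp
qed

lemma lin_sum:
  assumes "clinear_superop (B :: ('d::finite) superop)" and "finite F"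
  shows "B (\<lambda>i j. \<Sum>x\<in>F. c x * f x i j) = (\<lambda>i j. \<Sum>x\<in>F. c x * B (f x) i j)"
  using assms(2)
proof (induction F rule: finite_induct)
  case empty
  then show ?case using lin_zero[OF assms(1)] by simp
next
  case (insert x F)
  have add: "B (\<lambda>i j. X i j + Y i j) = (\<lambda>i j. B X i j + B Y i j)" for X Y
    using assms(1) unfolding clinear_superop_def by blast
  have sc: "B (\<lambda>i j. c * X i j) = (\<lambda>i j. c * B X i j)" for c X
    using assms(1) unfolding clinear_superop_def by blast
  have "B (\<lambda>i j. \<Sum>y\<in>insert x F. c y * f y i j)
      = B (\<lambda>i j. (\<lambda>i j. c x * f x i j) i j + (\<lambda>i j. \<Sum>y\<in>F. c y * f y i j) i j)"
    using insert by simp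
  also have "\<dots> = (\<lambda>i j. B (\<lambda>i j. c x * f x i j) i j + B (\<lambda>i j. \<Sum>y\<in>F. c y * f y i j) i j)"
    by (rule add)
  also have "\<dots> = (\<lambda>i j. \<Sum>y\<in>insert x F. c y * B (f y) i j)"
    using insert sc[of "c x" "f x"] by simp
  finally show ?case .
qed

lemma dephase_classical: "classical_channel (dephase :: ('d::finite) superop)"
  unfolding classical_channel_def using dephase_channel by (auto simp: fun_eq_iff dephase_def)

lemma Tk_classical: "classical_channel (Tk k :: ('d::finite) superop)"
  unfolding classical_channel_def using Tk_channel
  by (auto simp: fun_eq_iff dephase_def Tk_def mtrace_def Ek_def)

lemma commutant_D:
  fixes Act :: "('d::finite) superop set"
  assumes classical_in: "\<forall>T. classical_channel T \<longrightarrow> T \<in> Act"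
    and B: "B \<in> commutant Act"
  shows "dephase \<circ> B = dephase" "B \<circ> dephase = dephase"
proof -
  have ch: "channel B" and com: "\<forall>T\<in>Act. B \<circ> T = T \<circ> B" using B unfolding commutant_def by auto
  have lin: "clinear_superop B" and tp: "trace_preserving B" using ch unfolding channel_def by auto
  have DA: "dephase \<in> Act" using classical_in dephase_classical by blast
  have BD: "B \<circ> dephase = dephase \<circ> B" using com DA by blast
  have fix_E: "B (Ek k) = Ek k" for k
  proof -
    have "Tk k \<in> Act" using classical_in Tk_classical by blast
    then have "B (Tk k (Ek k)) = Tk k (B (Ek k))" using com by (metis comp_apply)
    moreover have "mtrace (Ek k :: 'd qmat) = 1" by (simp add: mtrace_def Ek_def)
    moreover have "mtrace (B (Ek k)) = mtrace (Ek k)" using tp unfolding trace_preserving_def by blast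
    ultimately show ?thesis by (simp add: Tk_def)
  qed
  have BDX: "B (dephase X) = dephase X" for X
  proof -
    have "dephase X = (\<lambda>i j. \<Sum>k\<in>UNIV. X k k * Ek k i j)"
      by (auto simp: fun_eq_iff dephase_def Ek_def if_distrib cong: if_cong intro!: sum.neutral)
    then have "B (dephase X) = (\<lambda>i j. \<Sum>k\<in>UNIV. X k k * B (Ek k) i j)"
      using lin_sum[OF lin, of UNIV "\<lambda>k. X k k" Ek] by simp
    also have "\<dots> = dephase X" using \<open>dephase X = _\<close> fix_E by simp
    finally show ?thesis .
  qed
  show "B \<circ> dephase = dephase" using BDX by (simp add: fun_eq_iff)
  then show "dephase \<circ> B = dephase" using BD by simp
qed

theorem mainTheorem10:
  fixes Act :: "('d::finite) superop set"
  assumes act_channels: "\<forall>T\<in>Act. channel T"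
    and classical_in: "\<forall>T. classical_channel T \<longrightarrow> T \<in> Act"
    and commute_D: "\<forall>T\<in>Act. dephase \<circ> T = T \<circ> dephase"
  shows "(\<forall>\<rho> \<sigma>. density \<rho> \<longrightarrow> density \<sigma> \<longrightarrow>
            (state_equiv Act \<rho> \<sigma> \<longleftrightarrow> dephase \<rho> = dephase \<sigma>)) \<and>
         (\<forall>S T. S \<in> commutant (commutant Act) \<longrightarrow> T \<in> commutant (commutant Act) \<longrightarrow>
            (trans_equiv Act S T \<longleftrightarrow> dephase \<circ> S \<circ> dephase = dephase \<circ> T \<circ> dephase))"
proof -
  have Dc: "dephase \<in> commutant Act"
    unfolding commutant_def using dephase_channel commute_D by auto
  note cD = commutant_D[OF classical_in]
  have part1: "state_equiv Act \<rho> \<sigma> \<longleftrightarrow> dephase \<rho> = dephase \<sigma>"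
    if "density \<rho>" "density \<sigma>" for \<rho> \<sigma>
  proof
    assume "state_equiv Act \<rho> \<sigma>"
    then show "dephase \<rho> = dephase \<sigma>"
      unfolding state_equiv_def
    proof (induction rule: rtranclp_induct)
      case base then show ?case by simp
    next
      case (step y z)
      then obtain B1 B2 where b: "B1 \<in> commutant Act" "B2 \<in> commutant Act" "B1 y = B2 z"
        unfolding Deg_state_def by blast
      have "dephase y = dephase (B1 y)" using cD(1)[OF b(1)] by (metis comp_apply)
      also have "\<dots> = dephase (B2 z)" using b(3) by simp
      also have "\<dots> = dephase z" using cD(1)[OF b(2)] by (metis comp_apply)
      finally show ?case using step by simp
    qed
  next
    assume "dephase \<rho> = dephase \<sigma>"
    then have "Deg_state Act \<rho> \<inter> Deg_state Act \<sigma> \<noteq> {}"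
      unfolding Deg_state_def using Dc by blast
    then show "state_equiv Act \<rho> \<sigma>"
      unfolding state_equiv_def using that by (intro r_into_rtranclp) simp
  qed
  have part2: "trans_equiv Act S T \<longleftrightarrow> dephase \<circ> S \<circ> dephase = dephase \<circ> T \<circ> dephase"
    if "S \<in> commutant (commutant Act)" "T \<in> commutant (commutant Act)" for S T
  proof
    assume "trans_equiv Act S T"
    then show "dephase \<circ> S \<circ> dephase = dephase \<circ> T \<circ> dephase"
      unfolding trans_equiv_def
    proof (induction rule: rtranclp_induct)
      case base then show ?case by simp
    next
      case (step y z)
      then obtain B1 B2 B3 B4 where b: "B1 \<in> commutant Act" "B2 \<in> commutant Act"
        "B3 \<in> commutant Act" "B4 \<in> commutant Act" "B1 \<circ> y \<circ> B2 = B3 \<circ> z \<circ> B4"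
        unfolding Deg_trans_def by blast
      have "dephase \<circ> y \<circ> dephase = (dephase \<circ> B1) \<circ> y \<circ> (B2 \<circ> dephase)"
        using cD[OF b(1)] cD[OF b(2)] by simp
      also have "\<dots> = dephase \<circ> (B1 \<circ> y \<circ> B2) \<circ> dephase" by (simp add: comp_assoc)
      also have "\<dots> = dephase \<circ> (B3 \<circ> z \<circ> B4) \<circ> dephase" using b(5) by simp
      also have "\<dots> = (dephase \<circ> B3) \<circ> z \<circ> (B4 \<circ> dephase)" by (simp add: comp_assoc)
      also have "\<dots> = dephase \<circ> z \<circ> dephase" using cD[OF b(3)] cD[OF b(4)] by simp
      finally have "dephase \<circ> y \<circ> dephase = dephase \<circ> z \<circ> dephase" .
      with step.IH show ?case by (simp only:)
    qed
  next
    assume "dephase \<circ> S \<circ> dephase = dephase \<circ> T \<circ> dephase"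
    then have "Deg_trans Act S \<inter> Deg_trans Act T \<noteq> {}"
      unfolding Deg_trans_def using Dc by blast
    then show "trans_equiv Act S T"
      unfolding trans_equiv_def using that by (intro r_into_rtranclp) simp
  qed
  show ?thesis using part1 part2 by blast
qed

end
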